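(* Let $K$ be a finite simplicial complex, let $f\colon K\to\mathbb{R}$ be an injective filtration function, let $\sigma_1,\ldots,\sigma_k$ be $n$-dimensional simplices of $K$, and let $\pi\in S_k$ be an arbitrary permutation of $\{1,\ldots,k\}$. Assume that for some $\varepsilon>0$ we have $$f(\sigma_1)<f(\sigma_2)<\cdots<f(\sigma_k)<f(\sigma_1)+2\varepsilon.$$ Then there exists an injective filtration function $g$ on $K$ such that $\|f-g\|_\infty\le\varepsilon$ and $$g(\sigma_{\pi(1)})<g(\sigma_{\pi(2)})<\cdots<g(\sigma_{\pi(k)}).$$
   Context: A filtration function on a finite simplicial complex $K$ is a map $f\colon K\to\mathbb{R}$ such that $f(\sigma)\le f(\tau)$ whenever $\sigma$ is a face of $\tau$. For two functions $f,g\colon K\to\mathbb{R}$, $\|f-g\|_\infty=\max_{\sigma\in K}|f(\sigma)-g(\sigma)|$. *)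

theory Defs
  imports Complex_Main "HOL-Combinatorics.Permutations"
begin

definition simplicial_complex :: "'a set set \<Rightarrow> bool" where
  "simplicial_complex K \<longleftrightarrow> finite K \<and>
     (\<forall>\<sigma>\<in>K. finite \<sigma> \<and> \<sigma> \<noteq> {}) \<and>
     (\<forall>\<sigma>\<in>K. \<forall>\<tau>. \<tau> \<subseteq> \<sigma> \<and> \<tau> \<noteq> {} \<longrightarrow> \<tau> \<in> K)"

definition simplex_dim :: "'a set \<Rightarrow> nat" where
  "simplex_dim \<sigma> = card \<sigma> - 1"

definition filtration :: "'a set set \<Rightarrow> ('a set \<Rightarrow> real) \<Rightarrow> bool" where
  "filtration K f \<longleftrightarrow> (\<forall>\<sigma>\<in>K. \<forall>\<tau>\<in>K. \<sigma> \<subseteq> \<tau> \<longrightarrow> f \<sigma> \<le> f \<tau>)"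

definition sup_dist :: "'a set set \<Rightarrow> ('a set \<Rightarrow> real) \<Rightarrow> ('a set \<Rightarrow> real) \<Rightarrow> real" where
  "sup_dist K f g = Max ((\<lambda>\<sigma>. \<bar>f \<sigma> - g \<sigma>\<bar>) ` K)"

end

theory Submission
  imports Defs
begin

theorem corollary2p2:
  fixes K :: "'a set set" and f :: "'a set \<Rightarrow> real"
    and \<sigma> :: "nat \<Rightarrow> 'a set" and k n :: nat and \<pi> :: "nat \<Rightarrow> nat" and \<epsilon> :: real
  assumes "simplicial_complex K"
    and "filtration K f" and "inj_on f K"
    and "k \<ge> 1"
    and "\<forall>i\<in>{1..k}. \<sigma> i \<in> K \<and> simplex_dim (\<sigma> i) = n"
    and "\<pi> permutes {1..k}"
    and "\<epsilon> > 0"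
    and "\<forall>i\<in>{1..<k}. f (\<sigma> i) < f (\<sigma> (i + 1))"
    and "f (\<sigma> k) < f (\<sigma> 1) + 2 * \<epsilon>"
  shows "\<exists>g. filtration K g \<and> inj_on g K \<and> sup_dist K f g \<le> \<epsilon> \<and>
             (\<forall>i\<in>{1..<k}. g (\<sigma> (\<pi> i)) < g (\<sigma> (\<pi> (i + 1))))"
proof -
  from assms(1) have finK: "finite K" and ne: "\<forall>s\<in>K. finite s \<and> s \<noteq> {}"
    unfolding simplicial_complex_def by auto
  have mono_s: "f (\<sigma> i) < f (\<sigma> j)" if "1 \<le> i" "i < j" "j \<le> k" for i j
  proof -
    have "\<forall>j. i < j \<longrightarrow> j \<le> k \<longrightarrow> f (\<sigma> i) < f (\<sigma> j)"
    proof
      fix j show "i < j \<longrightarrow> j \<le> k \<longrightarrow> f (\<sigma> i) < f (\<sigma> j)"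
      proof (induction j)
        case 0 then show ?case by simp
      next
        case (Suc j)
        show ?case
        proof (intro impI)
          assume a1: "i < Suc j" "Suc j \<le> k"
          have jin: "j \<in> {1..<k}" using a1 that by auto
          have step: "f (\<sigma> j) < f (\<sigma> (Suc j))" using assms(8) jin by simp
          show "f (\<sigma> i) < f (\<sigma> (Suc j))"
          proof (cases "i = j")
            case True then show ?thesis using step by simp
          next
            case False
            then have "f (\<sigma> i) < f (\<sigma> j)" using Suc.IH a1 by simp
            then show ?thesis using step by simp
          qed
        qed
      qed
    qed
    then show ?thesis using that by blast
  qed
  define a where "a = f (\<sigma> 1)"
  define b where "b = f (\<sigma> k)"
  have ab: "a \<le> f (\<sigma> j) \<and> f (\<sigma> j) \<le> b" if "j \<in> {1..k}" for j
  proof -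
    have "a \<le> f (\<sigma> j)" unfolding a_def
      using mono_s[of 1 j] that by (cases "j = 1") auto
    moreover have "f (\<sigma> j) \<le> b" unfolding b_def
      using mono_s[of j k] that by (cases "j = k") auto
    ultimately show ?thesis by simp
  qed
  have ab0: "a \<le> b" using ab[of 1] assms(4) by auto
  have ab2: "b < a + 2 * \<epsilon>" using assms(9) unfolding a_def b_def .
  define c where "c = (a + b) / 2"
  define e' where "e' = ((b - a) / 2 + \<epsilon>) / 2"
  have e'lt: "e' < \<epsilon>" unfolding e'_def using ab2 by simp
  have e'ge: "(b - a) / 2 \<le> e'" unfolding e'_def using ab2 by (simp add: field_simps)
  define \<phi> where "\<phi> = (\<lambda>x. max (x - e') (min c (x + e')))"
  have \<phi>mono: "\<phi> x \<le> \<phi> y" if "x \<le> y" for x y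
    using that unfolding \<phi>_def max_def min_def by auto
  have \<phi>close: "\<bar>\<phi> x - x\<bar> \<le> e'" for x
    using e'ge ab0 unfolding \<phi>_def max_def min_def by auto
  have \<phi>c: "\<phi> x = c" if "\<bar>x - c\<bar> \<le> e'" for x
    using that unfolding \<phi>_def max_def min_def by auto
  obtain h :: "'a set \<Rightarrow> nat" where h: "inj_on h K"
    using finite_imp_inj_to_nat_seg[OF finK] by blast
  have injs: "inj_on \<sigma> {1..k}"
  proof (rule inj_onI)
    fix x y assume xy: "x \<in> {1..k}" "y \<in> {1..k}" "\<sigma> x = \<sigma> y"
    show "x = y"
    proof (rule linorder_cases[of x y])
      assume "x < y" then show ?thesis using mono_s[of x y] xy by auto
    next
      assume "y < x" then show ?thesis using mono_s[of y x] xy by auto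
    qed
  qed
  have injsp: "inj_on (\<sigma> \<circ> \<pi>) {1..k}"
    using comp_inj_on[OF permutes_inj_on[OF assms(6)]] injs permutes_image[OF assms(6)] by metis
  define S where "S = (\<sigma> \<circ> \<pi>) ` {1..k}"
  define t where "t = (\<lambda>\<tau>. if \<tau> \<in> S then the_inv_into {1..k} (\<sigma> \<circ> \<pi>) \<tau> else k + 1 + h \<tau>)"
  have tS: "t \<tau> \<in> {1..k}" if "\<tau> \<in> S" for \<tau>
    using that the_inv_into_into[OF injsp, of \<tau> "{1..k}"] unfolding t_def S_def by auto
  have t_inj: "inj_on t K"
  proof (rule inj_onI)
    fix x y assume xy: "x \<in> K" "y \<in> K" "t x = t y"
    show "x = y"
    proof (cases "x \<in> S")
      case True
      note xS = True
      show ?thesis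
      proof (cases "y \<in> S")
        case True
        then show ?thesis using xS xy unfolding t_def S_def
          by (metis f_the_inv_into_f[OF injsp])
      next
        case False
        then show ?thesis using tS[OF xS] xy unfolding t_def by auto
      qed
    next
      case False
      note xS = False
      show ?thesis
      proof (cases "y \<in> S")
        case True
        then show ?thesis using tS[OF True] xy xS unfolding t_def by auto
      next
        case False
        then show ?thesis using xS xy h unfolding t_def by (auto dest: inj_onD)
      qed
    qed
  qed
  define M where "M = Suc (Max (t ` K))"
  have tM: "t \<tau> < M" if "\<tau> \<in> K" for \<tau>
    using that finK unfolding M_def by (simp add: le_imp_less_Suc)
  define r where "r = (\<lambda>\<tau>. card \<tau> * M + t \<tau>)"
  have r_inj: "inj_on r K"
  proof (rule inj_onI)
    fix x y assume xy: "x \<in> K" "y \<in> K" "r x = r y"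
    have d1: "r x div M = card x" "r x mod M = t x" using tM[OF xy(1)] unfolding r_def by auto
    have d2: "r y div M = card y" "r y mod M = t y" using tM[OF xy(2)] unfolding r_def by auto
    have "t x = t y" using d1 d2 xy(3) by simp
    then show "x = y" using t_inj xy by (auto dest: inj_onD)
  qed
  have r_mono: "r x < r y" if "x \<in> K" "y \<in> K" "x \<subset> y" for x y
  proof -
    have "card x < card y" using psubset_card_mono ne that by auto
    then have "Suc (card x) * M \<le> card y * M" by (intro mult_le_mono1) simp
    then show ?thesis using tM[OF that(1)] unfolding r_def by simp
  qed
  define Rm where "Rm = Max (r ` K)"
  have rRm: "r \<tau> \<le> Rm" if "\<tau> \<in> K" for \<tau> using that finK unfolding Rm_def by simp
  define B where "B = (\<epsilon> - e') / (real Rm + 1)"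
  have Bpos: "B > 0" unfolding B_def using e'lt by simp
  define D where "D = (\<lambda>(x,y). (\<phi> (f x) - \<phi> (f y)) / (real (r y) - real (r x))) ` (K \<times> K)"
  have finD: "finite D" unfolding D_def using finK by simp
  obtain \<delta> where \<delta>: "0 < \<delta>" "\<delta> < B" "\<delta> \<notin> D"
  proof -
    have "\<not> {0<..<B} \<subseteq> D"
      using finite_subset[OF _ finD] infinite_Ioo[OF Bpos] by blast
    then obtain x where "x \<in> {0<..<B}" "x \<notin> D" by blast
    then show ?thesis using that[of x] by simp
  qed
  define g where "g = (\<lambda>\<tau>. \<phi> (f \<tau>) + \<delta> * real (r \<tau>))"
  have filt: "filtration K g"
    unfolding filtration_def
  proof (intro ballI impI)
    fix x y assume xy: "x \<in> K" "y \<in> K" "x \<subseteq> y"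
    show "g x \<le> g y"
    proof (cases "x = y")
      case True then show ?thesis by simp
    next
      case False
      then have "r x < r y" using r_mono xy by auto
      then have "\<delta> * real (r x) \<le> \<delta> * real (r y)" using \<delta>(1) by simp
      moreover have "\<phi> (f x) \<le> \<phi> (f y)" using \<phi>mono assms(2) xy unfolding filtration_def by auto
      ultimately show ?thesis unfolding g_def by simp
    qed
  qed
  have ginj: "inj_on g K"
  proof (rule inj_onI)
    fix x y assume xy: "x \<in> K" "y \<in> K" "g x = g y"
    show "x = y"
    proof (cases "r x = r y")
      case True then show ?thesis using r_inj xy by (auto dest: inj_onD)
    next
      case False
      then have nz: "real (r y) - real (r x) \<noteq> 0" by simp
      have "\<phi> (f x) - \<phi> (f y) = \<delta> * (real (r y) - real (r x))"
        using xy(3) unfolding g_def by (simp add: algebra_simps)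
      then have "\<delta> = (\<phi> (f x) - \<phi> (f y)) / (real (r y) - real (r x))"
        using nz by (simp add: field_simps)
      then have "\<delta> \<in> D" unfolding D_def using xy by force
      then show ?thesis using \<delta>(3) by simp
    qed
  qed
  have Kne: "K \<noteq> {}" using assms(5) assms(4) by auto
  have sd: "sup_dist K f g \<le> \<epsilon>"
    unfolding sup_dist_def
  proof (subst Max_le_iff)
    show "finite ((\<lambda>\<sigma>. \<bar>f \<sigma> - g \<sigma>\<bar>) ` K)" using finK by simp
    show "(\<lambda>\<sigma>. \<bar>f \<sigma> - g \<sigma>\<bar>) ` K \<noteq> {}" using Kne by simp
    show "\<forall>a\<in>(\<lambda>\<sigma>. \<bar>f \<sigma> - g \<sigma>\<bar>) ` K. a \<le> \<epsilon>"
    proof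
      fix z assume "z \<in> (\<lambda>\<sigma>. \<bar>f \<sigma> - g \<sigma>\<bar>) ` K"
      then obtain \<tau> where \<tau>: "\<tau> \<in> K" "z = \<bar>f \<tau> - g \<tau>\<bar>" by auto
      have r1: "real (r \<tau>) \<le> real Rm" using rRm[OF \<tau>(1)] by simp
      have "\<delta> * real (r \<tau>) \<le> B * real Rm"
        using r1 \<delta> by (intro mult_mono) auto
      also have "B * real Rm \<le> B * (real Rm + 1)" using Bpos by simp
      also have "\<dots> = \<epsilon> - e'" unfolding B_def by simp
      finally have "\<delta> * real (r \<tau>) \<le> \<epsilon> - e'" .
      moreover have "0 \<le> \<delta> * real (r \<tau>)" using \<delta> by simp
      moreover note \<phi>close[of "f \<tau>"]
      ultimately show "z \<le> \<epsilon>" unfolding \<tau>(2) g_def by linarith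
    qed
  qed
  have ord: "\<forall>i\<in>{1..<k}. g (\<sigma> (\<pi> i)) < g (\<sigma> (\<pi> (i + 1)))"
  proof
    fix i assume i: "i \<in> {1..<k}"
    have gval: "g (\<sigma> (\<pi> j)) = c + \<delta> * real ((n + 1) * M + j)" if j: "j \<in> {1..k}" for j
    proof -
      have pj: "\<pi> j \<in> {1..k}" using permutes_in_image[OF assms(6)] j by simp
      have "\<bar>f (\<sigma> (\<pi> j)) - c\<bar> \<le> e'" using ab[OF pj] e'ge unfolding c_def by (auto simp: abs_le_iff field_simps)
      then have 1: "\<phi> (f (\<sigma> (\<pi> j))) = c" by (rule \<phi>c)
      have inK: "\<sigma> (\<pi> j) \<in> K" and dim: "card (\<sigma> (\<pi> j)) - 1 = n"
        using assms(5) pj unfolding simplex_dim_def by auto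
      have "card (\<sigma> (\<pi> j)) \<noteq> 0" using ne inK by auto
      then have 2: "card (\<sigma> (\<pi> j)) = n + 1" using dim by simp
      have "\<sigma> (\<pi> j) \<in> S" unfolding S_def using j by force
      then have 3: "t (\<sigma> (\<pi> j)) = j" unfolding t_def
        using the_inv_into_f_f[OF injsp j] by simp
      show ?thesis unfolding g_def r_def using 1 2 3 by simp
    qed
    have "i \<in> {1..k}" "i + 1 \<in> {1..k}" using i by auto
    then show "g (\<sigma> (\<pi> i)) < g (\<sigma> (\<pi> (i + 1)))" using gval \<delta>(1) by simp
  qed
  show ?thesis using filt ginj sd ord by blast
qed

end
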